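(* There is an infinite family of instances (temporal graphs $\mathcal G_n$ with parameters $T_{\max}$ and $\delta$ depending on $n$) such that, for every $k$, the witness complexity of $\mathcal G_n$ grows in $\Omega(|E(\mathcal G_n)|)$, with the implied constant independent of $k$.
   Context: A temporal graph $\mathcal G=(V,E,\lambda)$ with lifetime $T_{\max}$ consists of a finite undirected static graph $(V,E)$ and a labeling $\lambda:E\to\{1,\dots,T_{\max}\}$; edge $e$ is present only at time $\lambda(e)$. Infection model with parameter $\delta\in\mathbb N^+$: a set $S\subseteq V\times[0,T_{\max}]$ of at most $k$ seed infections is given; a seed $(u,t)$ makes $u$ infected at time $t$; otherwise a susceptible node $u$ becomes infected at time $t$ iff some neighbour $v$ infectious at time $t$ has $\lambda(uv)=t$ (exactly one infector recorded if several exist). A node infected at time $t$ is infectious at times $t+1,\dots,t+\delta$ and resistant afterwards. The infection log records triples $(u,v,t)$ ($u$ infected $v$ at time $t$; seeds as $(u,u,t)$); a log is consistent if produced by some infection chain. A witnessing schedule of length $a$ for $\mathcal G$ is a sequence $S_1,\dots,S_a$ of seed infection sets (each of size at most $k$) such that after performing these $a$ rounds, all edge labels of $\mathcal G$ are uniquely determined (among labelings of the known static graph $(V,E)$) by the infection logs of these rounds. The witness complexity of $\mathcal G$ is the length of a shortest witnessing schedule. *)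

theory Defs
  imports Complex_Main
begin

record tgraph =
  verts :: "nat set"
  edges :: "nat set set"
  lab   :: "nat set \<Rightarrow> nat"
  tmax  :: nat

definition tgraph_wf :: "tgraph \<Rightarrow> bool" where
  "tgraph_wf G \<longleftrightarrow> finite (verts G)
     \<and> (\<forall>e\<in>edges G. e \<subseteq> verts G \<and> card e = 2)
     \<and> (\<forall>e\<in>edges G. lab G e \<in> {1..tmax G})"

text \<open>An infection chain: ic u = Some (t, v) means u was infected at time t by v
  (v = u for a seed infection); None means u never got infected.
  The conditions characterise exactly the runs of the (nondeterministic in the choice
  of infector) infection process with infectious period delta and seed set S.\<close>
definition valid_chain ::
  "tgraph \<Rightarrow> nat \<Rightarrow> (nat \<times> nat) set \<Rightarrow> (nat \<Rightarrow> (nat \<times> nat) option) \<Rightarrow> bool" where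
  "valid_chain G \<delta> S ic \<longleftrightarrow>
     (\<forall>u t v. ic u = Some (t, v) \<longrightarrow> u \<in> verts G \<and>
        ((v = u \<and> (u, t) \<in> S) \<or>
         (v \<noteq> u \<and> (u, t) \<notin> S \<and> {u, v} \<in> edges G \<and> lab G {u, v} = t \<and>
          (\<exists>t' w. ic v = Some (t', w) \<and> t' < t \<and> t \<le> t' + \<delta>))))
   \<and> (\<forall>u t. (u, t) \<in> S \<longrightarrow> (\<exists>t' v. ic u = Some (t', v) \<and> t' \<le> t))
   \<and> (\<forall>u v t' w. {u, v} \<in> edges G \<longrightarrow> ic v = Some (t', w) \<longrightarrow>
        t' < lab G {u, v} \<longrightarrow> lab G {u, v} \<le> t' + \<delta> \<longrightarrow>
        (\<exists>t'' x. ic u = Some (t'', x) \<and> t'' \<le> lab G {u, v}))"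

text \<open>The infection log: triples (infector, infected, time); seeds as (u,u,t).\<close>
definition log_of :: "(nat \<Rightarrow> (nat \<times> nat) option) \<Rightarrow> (nat \<times> nat \<times> nat) set" where
  "log_of ic = {(v, u, t) | u v t. ic u = Some (t, v)}"

definition consistent_log ::
  "tgraph \<Rightarrow> nat \<Rightarrow> (nat \<times> nat) set \<Rightarrow> (nat \<times> nat \<times> nat) set \<Rightarrow> bool" where
  "consistent_log G \<delta> S L \<longleftrightarrow> (\<exists>ic. valid_chain G \<delta> S ic \<and> L = log_of ic)"

definition witnessing_schedule ::
  "tgraph \<Rightarrow> nat \<Rightarrow> nat \<Rightarrow> (nat \<times> nat) set list \<Rightarrow> bool" where
  "witnessing_schedule G \<delta> k Ss \<longleftrightarrow>
     (\<forall>S\<in>set Ss. S \<subseteq> verts G \<times> {0..tmax G} \<and> card S \<le> k)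
   \<and> (\<forall>lab'. (\<forall>e\<in>edges G. lab' e \<in> {1..tmax G}) \<longrightarrow>
        (\<forall>Ls. length Ls = length Ss \<longrightarrow>
           (\<forall>i<length Ss. consistent_log G \<delta> (Ss ! i) (Ls ! i)
                         \<and> consistent_log (G\<lparr>lab := lab'\<rparr>) \<delta> (Ss ! i) (Ls ! i)) \<longrightarrow>
           (\<forall>e\<in>edges G. lab' e = lab G e)))"

definition has_witnessing_schedule :: "tgraph \<Rightarrow> nat \<Rightarrow> nat \<Rightarrow> bool" where
  "has_witnessing_schedule G \<delta> k \<longleftrightarrow> (\<exists>Ss. witnessing_schedule G \<delta> k Ss)"

definition witness_complexity :: "tgraph \<Rightarrow> nat \<Rightarrow> nat \<Rightarrow> nat" where
  "witness_complexity G \<delta> k = (LEAST a. \<exists>Ss. length Ss = a \<and> witnessing_schedule G \<delta> k Ss)"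

end

theory Submission imports Defs begin

definition Gs :: "nat \<Rightarrow> tgraph" where
  "Gs m = \<lparr>verts = {0..m}, edges = (\<lambda>j. {0,j}) ` {1..m}, lab = Max, tmax = m\<rparr>"

lemma Gs_edges: "edges (Gs m) = (\<lambda>j. {0,j}) ` {1..m}" by (simp add: Gs_def)

lemma Gs_simps[simp]: "verts (Gs m) = {0..m}"
  "lab (Gs m) = Max" "tmax (Gs m) = m"
  by (simp_all add: Gs_def)

lemma edge_iff[simp]: "{u,v} \<in> edges (Gs m) \<longleftrightarrow> (u = 0 \<and> v \<in> {1..m}) \<or> (v = 0 \<and> u \<in> {1..m})"
  by (auto simp: doubleton_eq_iff Gs_edges)

lemma Max2[simp]: "Max {u::nat,v} = max u v" by simp

lemma wf: "tgraph_wf (Gs m)"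
  unfolding tgraph_wf_def by (auto simp: Gs_edges)

lemma card_edges: "card (edges (Gs m)) = m"
proof -
  have "inj_on (\<lambda>j. {0::nat,j}) {1..m}" by (auto simp: inj_on_def doubleton_eq_iff)
  then show ?thesis by (simp add: card_image Gs_edges)
qed

definition sd :: "nat \<Rightarrow> (nat \<times> nat) set \<Rightarrow> nat \<Rightarrow> nat" where
  "sd m S u = (LEAST t. (u,t) \<in> S \<or> t = m+5)"

definition tc :: "nat \<Rightarrow> (nat \<times> nat) set \<Rightarrow> nat" where
  "tc m S = (LEAST t. (0,t) \<in> S \<or> (1 \<le> t \<and> t \<le> m \<and> sd m S t = t - 1) \<or> t = m+5)"

definition chain :: "nat \<Rightarrow> (nat \<times> nat) set \<Rightarrow> nat \<Rightarrow> (nat \<times> nat) option" where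
  "chain m S u = (if u = 0 then (if tc m S < m+5 then Some (tc m S, if (0, tc m S) \<in> S then 0 else tc m S) else None)
    else if u \<le> m then (if sd m S u \<le> u then Some (sd m S u, u) else if tc m S + 1 = u then Some (u, 0)
      else if sd m S u < m+5 then Some (sd m S u, u) else None)
    else None)"

lemma sd_le: "(u,t) \<in> S \<Longrightarrow> sd m S u \<le> t"
  unfolding sd_def by (rule Least_le) simp

lemma sd_le5: "sd m S u \<le> m+5"
  unfolding sd_def by (rule Least_le) simp

lemma sd_mem: "sd m S u < m+5 \<Longrightarrow> (u, sd m S u) \<in> S"
proof -
  have "(u, sd m S u) \<in> S \<or> sd m S u = m+5"
    unfolding sd_def by (rule LeastI[where k="m+5"]) simp
  then show "sd m S u < m+5 \<Longrightarrow> (u, sd m S u) \<in> S" by auto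
qed

lemma tc_le0: "(0,t) \<in> S \<Longrightarrow> tc m S \<le> t"
  unfolding tc_def by (rule Least_le) simp

lemma tc_le1: "1 \<le> t \<Longrightarrow> t \<le> m \<Longrightarrow> sd m S t = t - 1 \<Longrightarrow> tc m S \<le> t"
  unfolding tc_def by (rule Least_le) simp

lemma tc_le5: "tc m S \<le> m+5"
  unfolding tc_def by (rule Least_le) simp

lemma tc_mem: "tc m S < m+5 \<Longrightarrow> (0, tc m S) \<in> S \<or> (1 \<le> tc m S \<and> tc m S \<le> m \<and> sd m S (tc m S) = tc m S - 1)"
proof -
  have "(0, tc m S) \<in> S \<or> (1 \<le> tc m S \<and> tc m S \<le> m \<and> sd m S (tc m S) = tc m S - 1) \<or> tc m S = m+5"
    unfolding tc_def by (rule LeastI[where k="m+5"]) simp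
  then show "tc m S < m+5 \<Longrightarrow> ?thesis" by auto
qed

lemma chain_valid:
  assumes S: "S \<subseteq> {0..m} \<times> {0..m}"
  shows "valid_chain (Gs m) 1 S (chain m S)"
  unfolding valid_chain_def
proof (intro conjI)
  show "\<forall>u t v. chain m S u = Some (t, v) \<longrightarrow> u \<in> verts (Gs m) \<and>
       (v = u \<and> (u, t) \<in> S \<or>
        v \<noteq> u \<and> (u, t) \<notin> S \<and> {u, v} \<in> edges (Gs m) \<and> lab (Gs m) {u, v} = t \<and>
        (\<exists>t' w. chain m S v = Some (t', w) \<and> t' < t \<and> t \<le> t' + 1))"
  proof (intro allI impI)
  fix u t v assume h: "chain m S u = Some (t, v)"
  show "u \<in> verts (Gs m) \<and>
       (v = u \<and> (u, t) \<in> S \<or>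
        v \<noteq> u \<and> (u, t) \<notin> S \<and> {u, v} \<in> edges (Gs m) \<and> lab (Gs m) {u, v} = t \<and>
        (\<exists>t' w. chain m S v = Some (t', w) \<and> t' < t \<and> t \<le> t' + 1))"
  proof (cases "u = 0")
    case True
    with h have tl: "tc m S < m+5" and t: "t = tc m S" and v: "v = (if (0, tc m S) \<in> S then 0 else tc m S)"
      by (auto simp: chain_def split: if_splits)
    show ?thesis
    proof (cases "(0, tc m S) \<in> S")
      case True then show ?thesis using v t \<open>u = 0\<close> by auto
    next
      case False
      with tc_mem[OF tl] have a: "1 \<le> tc m S" "tc m S \<le> m" "sd m S (tc m S) = tc m S - 1" by auto
      have "chain m S (tc m S) = Some (tc m S - 1, tc m S)" using a by (auto simp: chain_def)
      then show ?thesis using a False v t \<open>u = 0\<close> by auto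
    qed
  next
    case False
    then have um: "u \<le> m" using h by (auto simp: chain_def split: if_splits)
    show ?thesis
    proof (cases "sd m S u \<le> u")
      case True
      then have "t = sd m S u" "v = u" using h False um by (auto simp: chain_def)
      moreover have "(u, sd m S u) \<in> S" using True um by (intro sd_mem) simp
      ultimately show ?thesis using um by auto
    next
      case nle: False
      show ?thesis
      proof (cases "tc m S + 1 = u")
        case True
        then have tv: "t = u" "v = 0" using h False um nle by (auto simp: chain_def)
        have "(u,u) \<notin> S" using sd_le[of u u S m] nle by auto
        moreover have "chain m S 0 = Some (tc m S, if (0, tc m S) \<in> S then 0 else tc m S)"
          using True um by (auto simp: chain_def)
        ultimately show ?thesis using tv True um False by auto
      next
        case False2: False
        then have "t = sd m S u" "v = u" "sd m S u < m+5" using h False um nle by (auto simp: chain_def split: if_splits)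
        then show ?thesis using sd_mem um by auto
      qed
    qed
  qed
qed
next
  show "\<forall>u t. (u, t) \<in> S \<longrightarrow> (\<exists>t' v. chain m S u = Some (t', v) \<and> t' \<le> t)"
  proof (intro allI impI)
  fix u t assume h: "(u, t) \<in> S"
  then have um: "u \<le> m" "t \<le> m" using S by auto
  show "\<exists>t' v. chain m S u = Some (t', v) \<and> t' \<le> t"
  proof (cases "u = 0")
    case True
    then have "tc m S \<le> t" using tc_le0 h by auto
    then show ?thesis using True um by (auto simp: chain_def)
  next
    case False
    have "sd m S u \<le> t" using sd_le h by auto
    then show ?thesis using False um by (auto simp: chain_def)
  qed
qed
next
  show "\<forall>u v t' w. {u, v} \<in> edges (Gs m) \<longrightarrow> chain m S v = Some (t', w) \<longrightarrow>
        t' < lab (Gs m) {u, v} \<longrightarrow> lab (Gs m) {u, v} \<le> t' + 1 \<longrightarrow>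
        (\<exists>t'' x. chain m S u = Some (t'', x) \<and> t'' \<le> lab (Gs m) {u, v})"
  proof (intro allI impI)
  fix u v t' w
  assume e: "{u, v} \<in> edges (Gs m)" and h: "chain m S v = Some (t', w)"
    and l1: "t' < lab (Gs m) {u, v}" and l2: "lab (Gs m) {u, v} \<le> t' + 1"
  show "\<exists>t'' x. chain m S u = Some (t'', x) \<and> t'' \<le> lab (Gs m) {u, v}"
  proof (cases "v = 0")
    case True
    then have u: "1 \<le> u" "u \<le> m" using e by auto
    have "t' = tc m S" "tc m S < m+5" using h True by (auto simp: chain_def split: if_splits)
    then have "tc m S + 1 = u" using l1 l2 True by simp
    then show ?thesis using u True by (auto simp: chain_def)
  next
    case False
    then have u: "u = 0" "1 \<le> v" "v \<le> m" using e by auto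
    then have tv: "t' + 1 = v" using l1 l2 by simp
    show ?thesis
    proof (cases "sd m S v \<le> v")
      case True
      then have "t' = sd m S v" using h u by (auto simp: chain_def)
      then have "tc m S \<le> v" using tv u by (intro tc_le1) auto
      then show ?thesis using u by (auto simp: chain_def)
    next
      case nle: False
      then have "t' \<ge> v" using h u by (auto simp: chain_def split: if_splits)
      then show ?thesis using tv by simp
    qed
  qed
qed
qed


lemma forced:
  assumes v: "valid_chain (Gs m) 1 {(0,t)} ic" and tm: "t + 1 \<le> m"
  shows "ic (t+1) = Some (t+1, 0)"
proof -
  note V = v[unfolded valid_chain_def]
  have C1: "\<And>u t1 v. ic u = Some (t1, v) \<Longrightarrow> u \<le> m \<and>
        ((v = u \<and> (u, t1) \<in> {(0,t)}) \<or>
         (v \<noteq> u \<and> (u, t1) \<notin> {(0,t)} \<and> {u, v} \<in> edges (Gs m) \<and> max u v = t1 \<and>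
          (\<exists>t' w. ic v = Some (t', w) \<and> t' < t1 \<and> t1 \<le> t' + 1)))"
    using V by (simp only: Gs_simps Max2 atLeastAtMost_iff)
  have V2: "\<forall>u t1. (u, t1) \<in> {(0,t)} \<longrightarrow> (\<exists>t' v. ic u = Some (t', v) \<and> t' \<le> t1)"
    using V by (elim conjE) assumption
  from V2[rule_format, of 0 t] obtain t0 v0 where i0: "ic 0 = Some (t0, v0)" "t0 \<le> t" by blast
  have t0: "t0 = t"
  proof (rule ccontr)
    assume ne: "t0 \<noteq> t"
    with C1[OF i0(1)] obtain t' w where v0: "v0 \<noteq> 0" "ic v0 = Some (t', w)" "t' < t0"
      by auto
    from C1[OF v0(2)] v0(1) have "w \<noteq> v0" "{v0,w} \<in> edges (Gs m)"
      and "\<exists>t'' w'. ic w = Some (t'', w') \<and> t'' < t'" by auto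
    then have "w = 0" and "\<exists>t'' w'. ic w = Some (t'', w') \<and> t'' < t'" using v0(1) by auto
    then show False using i0 v0 by auto
  qed
  have V3: "\<forall>u v t' w. {u, v} \<in> edges (Gs m) \<longrightarrow> ic v = Some (t', w) \<longrightarrow>
        t' < lab (Gs m) {u, v} \<longrightarrow> lab (Gs m) {u, v} \<le> t' + 1 \<longrightarrow>
        (\<exists>t'' x. ic u = Some (t'', x) \<and> t'' \<le> lab (Gs m) {u, v})"
    using V by (elim conjE) assumption
  have "{t+1, 0} \<in> edges (Gs m)" using tm by simp
  from V3[rule_format, OF this, of t v0] have "\<exists>t'' x. ic (t+1) = Some (t'', x) \<and> t'' \<le> lab (Gs m) {t+1, 0}"
    using i0 t0 by simp
  then obtain t'' x where h: "ic (t+1) = Some (t'', x)" "t'' \<le> t+1" by auto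
  from C1[OF h(1)] have "x \<noteq> t+1" "{t+1, x} \<in> edges (Gs m)" "max (t+1) x = t''" by auto
  then show ?thesis using h by auto
qed

lemma has_sched:
  assumes k: "k \<ge> 1"
  shows "witnessing_schedule (Gs m) 1 k (map (\<lambda>t. {(0,t)}) [0..<m])"
  unfolding witnessing_schedule_def
proof (intro conjI allI impI ballI)
  fix S assume "S \<in> set (map (\<lambda>t. {(0::nat,t)}) [0..<m])"
  then show "S \<subseteq> verts (Gs m) \<times> {0..tmax (Gs m)}" by auto
next
  fix S assume "S \<in> set (map (\<lambda>t. {(0::nat,t)}) [0..<m])"
  then show "card S \<le> k" using k by auto
next
  fix lab' Ls e
  assume L: "length Ls = length (map (\<lambda>t. {(0::nat, t)}) [0..<m])"
    and C: "\<forall>i<length (map (\<lambda>t. {(0::nat, t)}) [0..<m]).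
          consistent_log (Gs m) 1 (map (\<lambda>t. {(0, t)}) [0..<m] ! i) (Ls ! i) \<and>
          consistent_log ((Gs m)\<lparr>lab := lab'\<rparr>) 1 (map (\<lambda>t. {(0, t)}) [0..<m] ! i) (Ls ! i)"
    and e: "e \<in> edges (Gs m)"
  from e obtain j where j: "e = {0,j}" "1 \<le> j" "j \<le> m" by (auto simp: Gs_edges)
  define t where "t = j - 1"
  have tm: "t < m" "t + 1 = j" using j by (auto simp: t_def)
  from C tm obtain ic ic' where v: "valid_chain (Gs m) 1 {(0,t)} ic" and v': "valid_chain ((Gs m)\<lparr>lab := lab'\<rparr>) 1 {(0,t)} ic'"
    and eq: "log_of ic = log_of ic'"
    unfolding consistent_log_def by force
  have "ic (t+1) = Some (t+1, 0)" using forced[OF v] tm by simp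
  then have "(0, t+1, t+1) \<in> log_of ic" unfolding log_of_def by blast
  then have "(0, t+1, t+1) \<in> log_of ic'" using eq by simp
  then have "ic' (t+1) = Some (t+1, 0)" unfolding log_of_def by blast
  then have "ic' (t+1) = Some (t+1, 0) \<and> lab' {t+1, 0} = t+1"
  proof -
    assume a: "ic' (t+1) = Some (t+1, 0)"
    have V1: "\<forall>u t1 v. ic' u = Some (t1, v) \<longrightarrow> u \<in> verts (Gs m\<lparr>lab := lab'\<rparr>) \<and>
        ((v = u \<and> (u, t1) \<in> {(0,t)}) \<or>
         (v \<noteq> u \<and> (u, t1) \<notin> {(0,t)} \<and> {u, v} \<in> edges (Gs m\<lparr>lab := lab'\<rparr>) \<and> lab (Gs m\<lparr>lab := lab'\<rparr>) {u, v} = t1 \<and>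
          (\<exists>t' w. ic' v = Some (t', w) \<and> t' < t1 \<and> t1 \<le> t' + 1)))"
      using v' unfolding valid_chain_def by (elim conjE) assumption
    from V1[rule_format, OF a] show ?thesis using a by simp
  qed
  then have "lab' {t+1, 0} = t+1" by simp
  then show "lab' e = lab (Gs m) e" using j tm by (simp add: insert_commute)
qed

lemma relabel:
  assumes v: "valid_chain G d S ic"
    and a: "\<And>u t v. ic u = Some (t, v) \<Longrightarrow> v \<noteq> u \<Longrightarrow> {u, v} \<noteq> E"
    and b: "\<And>u v t' w. {u,v} = E \<Longrightarrow> ic v = Some (t', w) \<Longrightarrow> t' < l \<Longrightarrow> l \<le> t' + d \<Longrightarrow>
            (\<exists>t'' x. ic u = Some (t'', x) \<and> t'' \<le> l)"
  shows "valid_chain (G\<lparr>lab := (lab G)(E := l)\<rparr>) d S ic"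
  using v unfolding valid_chain_def
  apply (intro conjI)
    apply (simp, smt (verit) a fun_upd_other)
   apply simp
  apply (simp, smt (verit) b fun_upd_other)
  done


lemma card_avoid:
  assumes "finite B" "card B < m"
  obtains x where "x \<in> {1..m}" "x \<notin> B"
proof -
  have "\<not> {1..m} \<subseteq> B"
  proof
    assume "{1..m} \<subseteq> B"
    then have "card {1..m} \<le> card B" using assms(1) by (rule card_mono[rotated])
    then show False using assms(2) by simp
  qed
  then show ?thesis using that by blast
qed

lemma lower:
  assumes W: "witnessing_schedule (Gs m) 1 k Ss"
  shows "m \<le> 2 * length Ss + 1"
proof (rule ccontr)
  assume "\<not> m \<le> 2 * length Ss + 1"
  then have big: "2 * length Ss + 2 \<le> m" by simp
  define a where "a = length Ss"
  define T where "T = (\<lambda>i. tc m (Ss!i)) ` {..<a}"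
  have cT: "card T \<le> a" unfolding T_def by (metis card_image_le card_lessThan finite_lessThan)
  have fT: "finite T" unfolding T_def by simp
  have "card (T \<union> Suc ` T) \<le> card T + card (Suc ` T)" by (rule card_Un_le)
  also have "card (Suc ` T) \<le> card T" by (rule card_image_le[OF fT])
  finally have "card (T \<union> Suc ` T) < m" using cT big a_def by linarith
  then obtain x where x: "x \<in> {1..m}" "x \<notin> T \<union> Suc ` T"
    using card_avoid[of "T \<union> Suc ` T" m] fT by blast
  define R where "R = (\<lambda>i. Suc (fst (the (chain m (Ss!i) x)))) ` {..<a}"
  have cR: "card R \<le> a" unfolding R_def by (metis card_image_le card_lessThan finite_lessThan)
  have "card ({x} \<union> Suc ` T \<union> R) \<le> card ({x} \<union> Suc ` T) + card R" by (rule card_Un_le)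
  also have "card ({x} \<union> Suc ` T) \<le> card {x} + card (Suc ` T)" by (rule card_Un_le)
  also have "card (Suc ` T) \<le> card T" by (rule card_image_le[OF fT])
  finally have "card ({x} \<union> Suc ` T \<union> R) < m" using cT cR big a_def by simp
  then obtain l where l: "l \<in> {1..m}" "l \<notin> {x} \<union> Suc ` T \<union> R"
    using card_avoid[of "{x} \<union> Suc ` T \<union> R" m] fT by (auto simp: R_def)
  define E where "E = {0::nat, x}"
  define lab' where "lab' = (lab (Gs m))(E := l)"
  define Ls where "Ls = map (\<lambda>S. log_of (chain m S)) Ss"
  have Ssub: "\<And>S. S \<in> set Ss \<Longrightarrow> S \<subseteq> {0..m} \<times> {0..m}"
    using W unfolding witnessing_schedule_def by auto
  have cons: "consistent_log (Gs m) 1 (Ss ! i) (Ls ! i) \<and>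
      consistent_log ((Gs m)\<lparr>lab := lab'\<rparr>) 1 (Ss ! i) (Ls ! i)" if i: "i < length Ss" for i
  proof -
    let ?S = "Ss ! i"
    have S: "?S \<subseteq> {0..m} \<times> {0..m}" using Ssub i by simp
    have v: "valid_chain (Gs m) 1 ?S (chain m ?S)" by (rule chain_valid[OF S])
    have tcT: "tc m ?S \<in> T" unfolding T_def a_def using i by blast
    have xR: "Suc (fst (the (chain m ?S x))) \<in> R" unfolding R_def a_def using i by blast
    have v': "valid_chain ((Gs m)\<lparr>lab := lab'\<rparr>) 1 ?S (chain m ?S)"
      unfolding lab'_def
    proof (rule relabel[OF v])
      fix u t w assume h: "chain m ?S u = Some (t, w)" "w \<noteq> u"
      show "{u, w} \<noteq> E"
      proof
        assume "{u, w} = E"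
        then have "(u = 0 \<and> w = x) \<or> (u = x \<and> w = 0)" unfolding E_def by (auto simp: doubleton_eq_iff)
        then show False
        proof
          assume "u = 0 \<and> w = x"
          then have "w = tc m ?S" using h x by (auto simp: chain_def split: if_splits)
          then show False using tcT x \<open>u = 0 \<and> w = x\<close> by auto
        next
          assume uw: "u = x \<and> w = 0"
          then have "tc m ?S + 1 = x" using h x by (auto simp: chain_def split: if_splits)
          then show False using tcT x by force
        qed
      qed
    next
      fix u w t' z assume h: "{u, w} = E" "chain m ?S w = Some (t', z)" "t' < l" "l \<le> t' + 1"
      then have lt: "l = Suc t'" by simp
      from h(1) have "w = 0 \<or> w = x" unfolding E_def by (auto simp: doubleton_eq_iff)
      then show "\<exists>t'' x. chain m ?S u = Some (t'', x) \<and> t'' \<le> l"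
      proof
        assume "w = 0"
        then have "t' = tc m ?S" using h(2) by (auto simp: chain_def split: if_splits)
        then show ?thesis using l tcT lt by auto
      next
        assume "w = x"
        then have "Suc t' \<in> R" using xR h(2) by simp
        then show ?thesis using l lt by auto
      qed
    qed
    show ?thesis using v v' unfolding consistent_log_def Ls_def using i by auto
  qed
  have "\<forall>e\<in>edges (Gs m). lab' e \<in> {1..tmax (Gs m)}"
    using l by (auto simp: lab'_def Gs_edges)
  moreover have W2: "\<And>lab' Ls. (\<forall>e\<in>edges (Gs m). lab' e \<in> {1..tmax (Gs m)}) \<Longrightarrow> length Ls = length Ss \<Longrightarrow>
     (\<forall>i<length Ss. consistent_log (Gs m) 1 (Ss ! i) (Ls ! i)
                         \<and> consistent_log ((Gs m)\<lparr>lab := lab'\<rparr>) 1 (Ss ! i) (Ls ! i)) \<Longrightarrow>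
           (\<forall>e\<in>edges (Gs m). lab' e = lab (Gs m) e)"
    using W unfolding witnessing_schedule_def by blast
  moreover have "length Ls = length Ss" by (simp add: Ls_def)
  ultimately have "\<forall>e\<in>edges (Gs m). lab' e = lab (Gs m) e"
    using cons by blast
  moreover have "E \<in> edges (Gs m)" using x by (simp add: E_def)
  ultimately have "lab' E = lab (Gs m) E" by blast
  then have "l = Max E" by (simp add: lab'_def)
  then show False using l x by (simp add: E_def)
qed

theorem mainTheorem3:
  shows "\<exists>(G :: nat \<Rightarrow> tgraph) (\<delta> :: nat \<Rightarrow> nat) (c :: real).
     c > 0
   \<and> (\<forall>n. tgraph_wf (G n) \<and> \<delta> n \<ge> 1)
   \<and> filterlim (\<lambda>n. card (edges (G n))) at_top sequentially
   \<and> (\<forall>k::nat. k \<ge> 1 \<longrightarrow>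
        (\<forall>\<^sub>F n in sequentially.
           has_witnessing_schedule (G n) (\<delta> n) k
         \<and> c * real (card (edges (G n))) \<le> real (witness_complexity (G n) (\<delta> n) k)))"
proof (intro exI conjI allI impI)
  show "(1/4::real) > 0" by simp
  fix n show "tgraph_wf (Gs (n+2))" by (rule wf)
next
  fix n show "(1::nat) \<le> 1" by simp
next
  show "filterlim (\<lambda>n. card (edges (Gs (n+2)))) at_top sequentially"
    using filterlim_add_const_nat_at_top[of 2] by (simp add: card_edges)
next
  fix k :: nat assume k: "k \<ge> 1"
  show "\<forall>\<^sub>F n in sequentially. has_witnessing_schedule (Gs (n+2)) 1 k
         \<and> 1/4 * real (card (edges (Gs (n+2)))) \<le> real (witness_complexity (Gs (n+2)) 1 k)"
  proof (rule always_eventually, intro allI conjI)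
    fix n :: nat
    let ?m = "n+2"
    have ex: "\<exists>Ss. length Ss = ?m \<and> witnessing_schedule (Gs ?m) 1 k Ss"
      using has_sched[OF k, of ?m] by (intro exI[of _ "map (\<lambda>t. {(0,t)}) [0..<?m]"]) simp
    then show "has_witnessing_schedule (Gs ?m) 1 k" unfolding has_witnessing_schedule_def by blast
    have ex2: "\<exists>a Ss. length Ss = a \<and> witnessing_schedule (Gs ?m) 1 k Ss" using ex by blast
    from LeastI_ex[OF ex2] obtain Ss where
      Ss: "length Ss = witness_complexity (Gs ?m) 1 k" "witnessing_schedule (Gs ?m) 1 k Ss"
      unfolding witness_complexity_def by blast
    have "?m \<le> 2 * witness_complexity (Gs ?m) 1 k + 1" using lower[OF Ss(2)] Ss(1) by simp
    then show "1/4 * real (card (edges (Gs ?m))) \<le> real (witness_complexity (Gs ?m) 1 k)"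
      by (simp add: card_edges)
  qed
qed

end
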